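(* If transformation graphs $G_1$ and $G_2$ reflect sequences of transitions $\sigma_1$ and $\sigma_2$ respectively, then $G_1\odot G_2$ reflects the concatenation $\sigma_1\sigma_2$.
   Context: Fix a finite set of clocks $X=\{x_0,x_1,\dots,x_m\}$, where $x_0$ is a special reference clock. A valuation is a map $v:X\to\mathbb{R}_{\ge 0}$ with $v(x_0)=0$. For $\delta\ge 0$, $v+\delta$ adds $\delta$ to every clock other than $x_0$; $[R]v$ sets the clocks of $R\subseteq X\setminus\{x_0\}$ to $0$. A guard is a conjunction of atomic constraints $x\sim c$ with $x\in X\setminus\{x_0\}$, $\sim\in\{<,\le,=,\ge,>\}$, $c\in\mathbb{N}$. A transition $t$ is a pair $(g,R)$ of a guard and a reset set $R\subseteq X\setminus\{x_0\}$; $v\xrightarrow{t}^{\delta}v'$ means $v+\delta\models g$ and $v'=[R](v+\delta)$. For $\sigma=t_1\cdots t_k$, $v_0\xrightarrow{\sigma}^{\delta}v_k$ means there are valuations $v_1,\dots,v_{k-1}$ and $\delta_i\ge0$ with $v_{i-1}\xrightarrow{t_i}^{\delta_i}v_i$ and $\delta=\sum_i\delta_i$. A loose valuation is a map $v:X\to\mathbb{R}$ with $v(x)\ge v(x_0)$ for all $x\in X$; $\mathit{norm}(v)$ is the valuation $x\mapsto v(x)-v(x_0)$. A weight is a pair $(\preccurlyeq,d)$ with $\preccurlyeq\in\{<,\le\}$, $d\in\mathbb{Z}$. A transformation graph with $k+1$ columns is a directed graph with vertex set $\{0,\dots,k\}\times X$ whose edges carry weights; vertex $(j,x)$ lies in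 column $j$. A solution of such a graph is a sequence $v_0,\dots,v_k$ of loose valuations such that for every edge $(i,x)\to(p,y)$ of weight $(\preccurlyeq,d)$ we have $v_p(y)-v_i(x)\preccurlyeq d$. A transformation graph with $k+1$ columns reflects a sequence $\sigma$ if (i) for every solution $v_0,\dots,v_k$ we have $\mathit{norm}(v_0)\xrightarrow{\sigma}^{\delta}\mathit{norm}(v_k)$ with $\delta=v_0(x_0)-v_k(x_0)$, and (ii) whenever $v_0\xrightarrow{\sigma}^{\delta}v'$ for valuations $v_0,v'$, there is a solution $v_0,u_1,\dots,u_k$ with $u_k=v'-\delta$, where $v'-\delta$ is the loose valuation $x\mapsto v'(x)-\delta$ for all $x\in X$ (including $x_0$). Composition: if $G_1$ has $k_1$ columns and $G_2$ has $k_2$ columns, $G_1\odot G_2$ is the transformation graph with vertex set $\{0,\dots,k_1+k_2-1\}\times X$ whose edges are: the edges of $G_1$ (on columns $0,\dots,k_1-1$); the edges of $G_2$ shifted by $k_1$ columns (an edge $(i,x)\to(j,y)$ of $G_2$ becomes $(i+k_1,x)\to(j+k_1,y)$ with the same weight); and, for every $x\in X$, edges $(k_1-1,x)\to(k_1,x)$ and $(k_1,x)\to(k_1-1,x)$ of weight $(\le,0)$. *)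

theory Defs
  imports Main "HOL.Real"
begin

text \<open>Clocks are the elements of a finite type 'c; the reference clock x0 is a parameter.\<close>

type_synonym 'c val = "'c \<Rightarrow> real"

definition is_val :: "'c \<Rightarrow> 'c val \<Rightarrow> bool" where
  "is_val x0 v \<longleftrightarrow> v x0 = 0 \<and> (\<forall>x. v x \<ge> 0)"

definition delay :: "'c \<Rightarrow> 'c val \<Rightarrow> real \<Rightarrow> 'c val" where
  "delay x0 v d = (\<lambda>x. if x = x0 then v x else v x + d)"

definition reset :: "'c set \<Rightarrow> 'c val \<Rightarrow> 'c val" where
  "reset R v = (\<lambda>x. if x \<in> R then 0 else v x)"

datatype cmp = CLt | CLe | CEq | CGe | CGt

fun cmp_sat :: "cmp \<Rightarrow> real \<Rightarrow> real \<Rightarrow> bool" where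
  "cmp_sat CLt a b = (a < b)"
| "cmp_sat CLe a b = (a \<le> b)"
| "cmp_sat CEq a b = (a = b)"
| "cmp_sat CGe a b = (a \<ge> b)"
| "cmp_sat CGt a b = (a > b)"

type_synonym 'c guard = "('c \<times> cmp \<times> nat) list"

definition guard_sat :: "'c val \<Rightarrow> 'c guard \<Rightarrow> bool" where
  "guard_sat v g \<longleftrightarrow> (\<forall>(x, r, c) \<in> set g. cmp_sat r (v x) (real c))"

type_synonym 'c trans = "'c guard \<times> 'c set"

definition trans_wf :: "'c \<Rightarrow> 'c trans \<Rightarrow> bool" where
  "trans_wf x0 t \<longleftrightarrow> (\<forall>(x, r, c) \<in> set (fst t). x \<noteq> x0) \<and> x0 \<notin> snd t"

definition step :: "'c \<Rightarrow> 'c val \<Rightarrow> 'c trans \<Rightarrow> real \<Rightarrow> 'c val \<Rightarrow> bool" where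
  "step x0 v t d v' \<longleftrightarrow> d \<ge> 0 \<and> guard_sat (delay x0 v d) (fst t) \<and> v' = reset (snd t) (delay x0 v d)"

inductive run :: "'c \<Rightarrow> 'c val \<Rightarrow> 'c trans list \<Rightarrow> real \<Rightarrow> 'c val \<Rightarrow> bool" for x0 where
  run_Nil: "run x0 v [] 0 v"
| run_Cons: "\<lbrakk>step x0 v t d v'; (\<sigma> \<noteq> [] \<longrightarrow> is_val x0 v'); run x0 v' \<sigma> d' v''\<rbrakk>
             \<Longrightarrow> run x0 v (t # \<sigma>) (d + d') v''"

definition loose :: "'c \<Rightarrow> 'c val \<Rightarrow> bool" where
  "loose x0 v \<longleftrightarrow> (\<forall>x. v x \<ge> v x0)"

definition norm :: "'c \<Rightarrow> 'c val \<Rightarrow> 'c val" where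
  "norm x0 v = (\<lambda>x. v x - v x0)"

text \<open>Weight (strict, d): strict = True means <, False means \<le>.\<close>
type_synonym weight = "bool \<times> int"

definition wsat :: "weight \<Rightarrow> real \<Rightarrow> bool" where
  "wsat w a \<longleftrightarrow> (if fst w then a < of_int (snd w) else a \<le> of_int (snd w))"

text \<open>A transformation graph: number of columns and a set of weighted edges
  ((i,x),(p,y),w) meaning (i,x) \<rightarrow> (p,y) with weight w.\<close>
type_synonym 'c tgraph = "nat \<times> ((nat \<times> 'c) \<times> (nat \<times> 'c) \<times> weight) set"

definition cols :: "'c tgraph \<Rightarrow> nat" where "cols G = fst G"
definition edges :: "'c tgraph \<Rightarrow> ((nat \<times> 'c) \<times> (nat \<times> 'c) \<times> weight) set" where
  "edges G = snd G"

definition tgraph_wf :: "'c tgraph \<Rightarrow> bool" where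
  "tgraph_wf G \<longleftrightarrow> cols G \<ge> 1 \<and>
     (\<forall>((i, x), (p, y), w) \<in> edges G. i < cols G \<and> p < cols G)"

definition solution :: "'c \<Rightarrow> 'c tgraph \<Rightarrow> (nat \<Rightarrow> 'c val) \<Rightarrow> bool" where
  "solution x0 G v \<longleftrightarrow> (\<forall>j < cols G. loose x0 (v j)) \<and>
     (\<forall>((i, x), (p, y), w) \<in> edges G. wsat w (v p y - v i x))"

definition reflects :: "'c \<Rightarrow> 'c tgraph \<Rightarrow> 'c trans list \<Rightarrow> bool" where
  "reflects x0 G \<sigma> \<longleftrightarrow>
     (\<forall>v. solution x0 G v \<longrightarrow>
        run x0 (norm x0 (v 0)) \<sigma> (v 0 x0 - v (cols G - 1) x0) (norm x0 (v (cols G - 1)))) \<and>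
     (\<forall>v0 d v'. is_val x0 v0 \<longrightarrow> is_val x0 v' \<longrightarrow> run x0 v0 \<sigma> d v' \<longrightarrow>
        (\<exists>u. solution x0 G u \<and> u 0 = v0 \<and> u (cols G - 1) = (\<lambda>x. v' x - d)))"

definition compose :: "'c tgraph \<Rightarrow> 'c tgraph \<Rightarrow> 'c tgraph" where
  "compose G1 G2 =
     (cols G1 + cols G2,
      edges G1
      \<union> {((i + cols G1, x), (j + cols G1, y), w) | i x j y w. ((i, x), (j, y), w) \<in> edges G2}
      \<union> {((cols G1 - 1, x), (cols G1, x), (False, 0)) | x. True}
      \<union> {((cols G1, x), (cols G1 - 1, x), (False, 0)) | x. True})"

end

theory Submission
  imports Defs
begin

lemma run_append:
  assumes "run x0 v s1 d1 vm" "s2 \<noteq> [] \<longrightarrow> is_val x0 vm" "run x0 vm s2 d2 v'"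
  shows "run x0 v (s1 @ s2) (d1 + d2) v'"
  using assms
proof (induction arbitrary: d2 rule: run.induct)
  case (run_Nil v)
  then show ?case by simp
next
  case (run_Cons v t d w \<sigma> d' v'')
  have iv: "\<sigma> @ s2 \<noteq> [] \<longrightarrow> is_val x0 w"
  proof (cases "\<sigma> = []")
    case True
    with run_Cons.hyps(3) have "w = v''" by (auto elim: run.cases)
    then show ?thesis using run_Cons True by auto
  qed (use run_Cons in auto)
  have "run x0 w (\<sigma> @ s2) (d' + d2) v'" using run_Cons by blast
  from run.run_Cons[OF run_Cons.hyps(1) iv this] show ?case
    by (simp add: add.assoc)
qed

inductive_cases run_ConsE: "run x0 v (t # s) d v'"
inductive_cases run_NilE: "run x0 v [] d v'"

lemma run_split:
  "run x0 v (s1 @ s2) d v' \<Longrightarrow> \<exists>vm d1 d2. run x0 v s1 d1 vm \<and> run x0 vm s2 d2 v' \<and> d = d1 + d2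
     \<and> (s1 \<noteq> [] \<and> s2 \<noteq> [] \<longrightarrow> is_val x0 vm)"
proof (induction s1 arbitrary: v d)
  case Nil
  then show ?case by (intro exI[of _ v] exI[of _ 0] exI[of _ d]) (auto intro: run.intros)
next
  case (Cons t s1)
  from Cons.prems have "run x0 v (t # (s1 @ s2)) d v'" by simp
  then obtain e w e' where st: "step x0 v t e w" and iw: "s1 @ s2 \<noteq> [] \<longrightarrow> is_val x0 w"
    and rw: "run x0 w (s1 @ s2) e' v'" and dd: "d = e + e'"
    by (rule run_ConsE) (auto simp del: append_is_Nil_conv)
  from Cons.IH[OF rw] obtain vm d1 d2 where h: "run x0 w s1 d1 vm" "run x0 vm s2 d2 v'" "e' = d1 + d2"
    "s1 \<noteq> [] \<and> s2 \<noteq> [] \<longrightarrow> is_val x0 vm" by blast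
  have r1: "run x0 v (t # s1) (e + d1) vm"
    by (rule run.run_Cons[OF st _ h(1)]) (use iw in auto)
  have "s2 \<noteq> [] \<longrightarrow> is_val x0 vm"
  proof (cases "s1 = []")
    case True
    with h(1) have "w = vm" by (auto elim: run_NilE)
    then show ?thesis using iw True by auto
  qed (use h in auto)
  then show ?case using r1 h dd by (intro exI[of _ vm] exI[of _ "e + d1"] exI[of _ d2]) auto
qed

lemma loose_norm: "loose x0 v \<Longrightarrow> is_val x0 (norm x0 v)"
  by (auto simp: loose_def norm_def is_val_def)

theorem mainTheorem6:
  fixes x0 :: "'c::finite"
    and G1 G2 :: "'c tgraph"
    and \<sigma>1 \<sigma>2 :: "'c trans list"
  assumes "tgraph_wf G1" and "tgraph_wf G2"
    and "\<forall>t \<in> set (\<sigma>1 @ \<sigma>2). trans_wf x0 t"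
    and "reflects x0 G1 \<sigma>1" and "reflects x0 G2 \<sigma>2"
  shows "reflects x0 (compose G1 G2) (\<sigma>1 @ \<sigma>2)"
proof -
  define k1 where "k1 = cols G1"
  define k2 where "k2 = cols G2"
  have k1: "k1 \<ge> 1" and k2: "k2 \<ge> 1" using assms(1,2) by (auto simp: tgraph_wf_def k1_def k2_def)
  have wf1: "\<And>i x p y w. ((i, x), (p, y), w) \<in> edges G1 \<Longrightarrow> i < k1 \<and> p < k1"
    using assms(1) unfolding tgraph_wf_def k1_def by fast
  have cc: "cols (compose G1 G2) = k1 + k2" by (simp add: compose_def cols_def k1_def k2_def)
  have ec: "edges (compose G1 G2) = edges G1
      \<union> {((i + k1, x), (j + k1, y), w) | i x j y w. ((i, x), (j, y), w) \<in> edges G2}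
      \<union> {((k1 - 1, x), (k1, x), (False, 0)) | x. True}
      \<union> {((k1, x), (k1 - 1, x), (False, 0)) | x. True}"
    by (simp add: compose_def edges_def k1_def)
  have R1a: "\<And>v. solution x0 G1 v \<Longrightarrow> run x0 (norm x0 (v 0)) \<sigma>1 (v 0 x0 - v (k1 - 1) x0) (norm x0 (v (k1 - 1)))"
    using assms(4) unfolding reflects_def k1_def by blast
  have R2a: "\<And>v. solution x0 G2 v \<Longrightarrow> run x0 (norm x0 (v 0)) \<sigma>2 (v 0 x0 - v (k2 - 1) x0) (norm x0 (v (k2 - 1)))"
    using assms(5) unfolding reflects_def k2_def by blast
  have R1b: "\<And>v0 d v'. is_val x0 v0 \<Longrightarrow> is_val x0 v' \<Longrightarrow> run x0 v0 \<sigma>1 d v' \<Longrightarrow>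
        (\<exists>u. solution x0 G1 u \<and> u 0 = v0 \<and> u (k1 - 1) = (\<lambda>x. v' x - d))"
    using assms(4) unfolding reflects_def k1_def by blast
  have R2b: "\<And>v0 d v'. is_val x0 v0 \<Longrightarrow> is_val x0 v' \<Longrightarrow> run x0 v0 \<sigma>2 d v' \<Longrightarrow>
        (\<exists>u. solution x0 G2 u \<and> u 0 = v0 \<and> u (k2 - 1) = (\<lambda>x. v' x - d))"
    using assms(5) unfolding reflects_def k2_def by blast
  show ?thesis
    unfolding reflects_def cc
  proof (intro conjI allI impI)
    fix v assume sv: "solution x0 (compose G1 G2) v"
    have lo: "\<And>j. j < k1 + k2 \<Longrightarrow> loose x0 (v j)" using sv cc by (auto simp: solution_def)
    have ed: "\<And>i x p y w. ((i, x), (p, y), w) \<in> edges (compose G1 G2) \<Longrightarrow> wsat w (v p y - v i x)"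
      using sv unfolding solution_def by fast
    have s1: "solution x0 G1 v"
      unfolding solution_def using lo ed ec k1_def by auto
    have s2: "solution x0 G2 (\<lambda>j. v (j + k1))"
    proof -
      have "\<And>i x p y w. ((i, x), (p, y), w) \<in> edges G2 \<Longrightarrow> wsat w (v (p + k1) y - v (i + k1) x)"
        by (rule ed) (unfold ec, blast)
      then show ?thesis unfolding solution_def using lo k2_def by auto
    qed
    have eqc: "v k1 = v (k1 - 1)"
    proof
      fix x
      have "wsat (False, 0) (v k1 x - v (k1 - 1) x)" by (rule ed) (unfold ec, blast)
      moreover have "wsat (False, 0) (v (k1 - 1) x - v k1 x)" by (rule ed) (unfold ec, blast)
      ultimately show "v k1 x = v (k1 - 1) x" by (simp add: wsat_def)
    qed
    note r1 = R1a[OF s1]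
    note r2 = R2a[OF s2]
    have "k2 - 1 + k1 = k1 + k2 - 1" using k2 by simp
    with r2 eqc have r2': "run x0 (norm x0 (v (k1 - 1))) \<sigma>2 (v (k1 - 1) x0 - v (k1 + k2 - 1) x0) (norm x0 (v (k1 + k2 - 1)))"
      by simp
    have iv: "is_val x0 (norm x0 (v (k1 - 1)))" using lo k1 by (intro loose_norm) auto
    from run_append[OF r1 _ r2'] iv
    show "run x0 (norm x0 (v 0)) (\<sigma>1 @ \<sigma>2) (v 0 x0 - v (k1 + k2 - 1) x0) (norm x0 (v (k1 + k2 - 1)))"
      by simp
  next
    fix v0 d v'
    assume v0: "is_val x0 v0" and v': "is_val x0 v'" and r: "run x0 v0 (\<sigma>1 @ \<sigma>2) d v'"
    from run_split[OF r] obtain vm d1 d2 where h: "run x0 v0 \<sigma>1 d1 vm" "run x0 vm \<sigma>2 d2 v'"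
      "d = d1 + d2" "\<sigma>1 \<noteq> [] \<and> \<sigma>2 \<noteq> [] \<longrightarrow> is_val x0 vm" by blast
    have ivm: "is_val x0 vm"
    proof (cases "\<sigma>1 = []")
      case True
      then show ?thesis using h(1) v0 by (auto elim: run_NilE)
    next
      case False
      show ?thesis
      proof (cases "\<sigma>2 = []")
        case True
        then show ?thesis using h(2) v' by (auto elim: run_NilE)
      qed (use False h in auto)
    qed
    obtain u1 where u1: "solution x0 G1 u1" "u1 0 = v0" "u1 (k1 - 1) = (\<lambda>x. vm x - d1)"
      using R1b[OF v0 ivm h(1)] by blast
    obtain u2 where u2: "solution x0 G2 u2" "u2 0 = vm" "u2 (k2 - 1) = (\<lambda>x. v' x - d2)"
      using R2b[OF ivm v' h(2)] by blast
    define u where "u j = (if j < k1 then u1 j else (\<lambda>x. u2 (j - k1) x - d1))" for j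
    have lo1: "\<And>j. j < k1 \<Longrightarrow> loose x0 (u1 j)" using u1(1) k1_def by (auto simp: solution_def)
    have lo2: "\<And>j. j < k2 \<Longrightarrow> loose x0 (u2 j)" using u2(1) k2_def by (auto simp: solution_def)
    have ed1: "\<And>i x p y w. ((i, x), (p, y), w) \<in> edges G1 \<Longrightarrow> wsat w (u1 p y - u1 i x)"
      using u1(1) unfolding solution_def by fast
    have ed2: "\<And>i x p y w. ((i, x), (p, y), w) \<in> edges G2 \<Longrightarrow> wsat w (u2 p y - u2 i x)"
      using u2(1) unfolding solution_def by fast
    have E: "wsat w (u p0 y0 - u i0 x0')" if em: "((i0, x0'), (p0, y0), w) \<in> edges (compose G1 G2)"
      for i0 x0' p0 y0 w
    proof -
      consider (a) "((i0, x0'), (p0, y0), w) \<in> edges G1"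
        | (b) i p where "i0 = i + k1" "p0 = p + k1" "((i, x0'), (p, y0), w) \<in> edges G2"
        | (c) "i0 = k1 - 1" "p0 = k1" "x0' = y0" "w = (False, 0)"
        | (d) "i0 = k1" "p0 = k1 - 1" "x0' = y0" "w = (False, 0)"
        using em unfolding ec by auto
      then show ?thesis
      proof cases
        case a
        then show ?thesis using wf1[OF a] ed1[OF a] by (simp add: u_def)
      next
        case (b i p)
        then show ?thesis using ed2[OF b(3)] by (simp add: u_def)
      next
        case c
        then show ?thesis using k1 u1(3) u2(2) by (simp add: u_def wsat_def)
      next
        case d
        then show ?thesis using k1 u1(3) u2(2) by (simp add: u_def wsat_def)
      qed
    qed
    have lou: "loose x0 (u j)" if "j < k1 + k2" for j
      using that lo1 lo2[of "j - k1"] by (auto simp: u_def loose_def)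
    have "solution x0 (compose G1 G2) u"
      unfolding solution_def cc using E lou by auto
    moreover have "u 0 = v0" using k1 u1(2) by (simp add: u_def)
    moreover have "u (k1 + k2 - 1) = (\<lambda>x. v' x - d)"
    proof -
      have "k1 + k2 - 1 - k1 = k2 - 1" "\<not> k1 + k2 - 1 < k1" using k2 by auto
      then show ?thesis using u2(3) h(3) by (auto simp: u_def)
    qed
    ultimately show "\<exists>u. solution x0 (compose G1 G2) u \<and> u 0 = v0 \<and> u (k1 + k2 - 1) = (\<lambda>x. v' x - d)"
      by blast
  qed
qed

end
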